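(* Let $\Phi=(G,\varphi)$ be a complex unit gain graph with a pendant vertex $u$ whose unique neighbour is $v$, and let $F^{\varphi}=\Phi-u-v$ with underlying graph $F=G-u-v$. If $r(\Phi)=r(G)+2\theta(G)$ (respectively $r(\Phi)=r(G)-2\theta(G)$), then $v$ does not lie on any cycle of $G$, and $r(F^{\varphi})=r(F)+2\theta(F)$ (respectively $r(F^{\varphi})=r(F)-2\theta(F)$).
   Context: A complex unit gain graph $\Phi=(G,\varphi)$ consists of a finite simple graph $G$ with vertex set $\{v_1,\dots,v_n\}$ and a gain function $\varphi$ assigning to each oriented edge $e_{ij}$ ($v_iv_j\in E(G)$) a complex number of modulus $1$ with $\varphi(e_{ji})=\overline{\varphi(e_{ij})}$. $A(\Phi)$ is the Hermitian matrix with $(i,j)$ entry $\varphi(e_{ij})$ if $v_iv_j\in E(G)$ and $0$ otherwise; $r(\Phi)$ is its rank; $r(\cdot)$ of a simple graph is the rank of its $0$-$1$ adjacency matrix. Induced subgraphs of $\Phi$ (such as $\Phi-u-v$, obtained by deleting $u,v$ and incident edges) carry the gains of $\Phi$. $\theta(G)=|E(G)|-|V(G)|+\omega(G)$, $\omega(G)$ the number of components. A pendant vertex is a vertex of degree $1$. *)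

theory Defs
  imports Complex_Main
begin

definition simple_graph :: "'a set \<Rightarrow> ('a \<Rightarrow> 'a \<Rightarrow> bool) \<Rightarrow> bool" where
  "simple_graph V E \<longleftrightarrow> finite V \<and> (\<forall>x y. E x y \<longrightarrow> x \<in> V \<and> y \<in> V)
     \<and> (\<forall>x y. E x y \<longrightarrow> E y x) \<and> (\<forall>x. \<not> E x x)"

definition unit_gain :: "('a \<Rightarrow> 'a \<Rightarrow> bool) \<Rightarrow> ('a \<Rightarrow> 'a \<Rightarrow> complex) \<Rightarrow> bool" where
  "unit_gain E phi \<longleftrightarrow> (\<forall>x y. E x y \<longrightarrow> cmod (phi x y) = 1 \<and> phi y x = cnj (phi x y))"

definition gain_adj :: "('a \<Rightarrow> 'a \<Rightarrow> bool) \<Rightarrow> ('a \<Rightarrow> 'a \<Rightarrow> complex) \<Rightarrow> 'a \<Rightarrow> 'a \<Rightarrow> complex" where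
  "gain_adj E phi i j = (if E i j then phi i j else 0)"

definition adj01 :: "('a \<Rightarrow> 'a \<Rightarrow> bool) \<Rightarrow> 'a \<Rightarrow> 'a \<Rightarrow> complex" where
  "adj01 E i j = (if E i j then 1 else 0)"

definition indep_cols :: "'a set \<Rightarrow> ('a \<Rightarrow> 'a \<Rightarrow> complex) \<Rightarrow> 'a set \<Rightarrow> bool" where
  "indep_cols V M S \<longleftrightarrow> S \<subseteq> V \<and>
     (\<forall>c. (\<forall>i\<in>V. (\<Sum>j\<in>S. c j * M i j) = 0) \<longrightarrow> (\<forall>j\<in>S. c j = 0))"

definition mrank :: "'a set \<Rightarrow> ('a \<Rightarrow> 'a \<Rightarrow> complex) \<Rightarrow> nat" where
  "mrank V M = Max (card ` {S. indep_cols V M S})"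

definition reach :: "'a set \<Rightarrow> ('a \<Rightarrow> 'a \<Rightarrow> bool) \<Rightarrow> 'a \<Rightarrow> 'a \<Rightarrow> bool" where
  "reach V E = (\<lambda>x y. x \<in> V \<and> y \<in> V \<and> E x y)\<^sup>*\<^sup>*"

definition num_components :: "'a set \<Rightarrow> ('a \<Rightarrow> 'a \<Rightarrow> bool) \<Rightarrow> nat" where
  "num_components V E = card ((\<lambda>x. {y \<in> V. reach V E x y}) ` V)"

definition edge_set :: "'a set \<Rightarrow> ('a \<Rightarrow> 'a \<Rightarrow> bool) \<Rightarrow> 'a set set" where
  "edge_set V E = {{x, y} | x y. x \<in> V \<and> y \<in> V \<and> E x y}"

definition theta :: "'a set \<Rightarrow> ('a \<Rightarrow> 'a \<Rightarrow> bool) \<Rightarrow> int" where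
  "theta V E = int (card (edge_set V E)) - int (card V) + int (num_components V E)"

definition on_cycle :: "'a set \<Rightarrow> ('a \<Rightarrow> 'a \<Rightarrow> bool) \<Rightarrow> 'a \<Rightarrow> bool" where
  "on_cycle V E v \<longleftrightarrow> (\<exists>xs. length xs \<ge> 3 \<and> distinct xs \<and> set xs \<subseteq> V \<and> hd xs = v
     \<and> (\<forall>i. Suc i < length xs \<longrightarrow> E (xs ! i) (xs ! Suc i)) \<and> E (last xs) (hd xs))"

end

theory Submission
  imports Defs
begin


lemma indep_fin: "finite W \<Longrightarrow> finite {S. indep_cols W M S}"
  by (rule finite_subset[of _ "Pow W"]) (auto simp: indep_cols_def)

lemma indep_empty: "indep_cols W M {}"
  by (simp add: indep_cols_def)

lemma mrank_ge: "finite W \<Longrightarrow> indep_cols W M S \<Longrightarrow> card S \<le> mrank W M"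
  unfolding mrank_def by (rule Max_ge) (auto intro: indep_fin)

lemma mrank_obtain: "finite W \<Longrightarrow> \<exists>S. indep_cols W M S \<and> card S = mrank W M"
proof -
  assume f: "finite W"
  have "mrank W M \<in> card ` {S. indep_cols W M S}"
    unfolding mrank_def using indep_fin[OF f] indep_empty by (intro Max_in) auto
  thus ?thesis by auto
qed

lemma indep_fin_S: "finite W \<Longrightarrow> indep_cols W M S \<Longrightarrow> finite S"
  by (auto simp: indep_cols_def intro: finite_subset)

lemma col_remove:
  assumes f: "finite W" and S: "indep_cols W M S"
  shows "indep_cols W M (S - {x})"
proof -
  have fS: "finite S" using indep_fin_S[OF f S] .
  show ?thesis unfolding indep_cols_def
  proof (intro conjI allI impI ballI)
    show "S - {x} \<subseteq> W" using S by (auto simp: indep_cols_def)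
  next
    fix c j assume h: "\<forall>i\<in>W. (\<Sum>j\<in>S - {x}. c j * M i j) = 0" and j: "j \<in> S - {x}"
    let ?c = "c(x := 0)"
    have Z: "\<forall>i\<in>W. (\<Sum>j\<in>S. ?c j * M i j) = 0"
    proof
      fix i assume i: "i \<in> W"
      have "(\<Sum>j\<in>S. ?c j * M i j) = (\<Sum>j\<in>S - {x}. c j * M i j)"
        using fS by (intro sum.mono_neutral_cong_right) auto
      thus "(\<Sum>j\<in>S. ?c j * M i j) = 0" using h i by simp
    qed
    hence "\<forall>j\<in>S. ?c j = 0" using S unfolding indep_cols_def by blast
    thus "c j = 0" using j by (metis DiffE fun_upd_other singletonI)
  qed
qed

lemma zero_row_remove:
  assumes S: "indep_cols W M S" and z: "\<forall>j\<in>S. M x j = 0" and x: "x \<notin> S"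
  shows "indep_cols (W - {x}) M S"
  unfolding indep_cols_def
proof (intro conjI allI impI)
  show "S \<subseteq> W - {x}" using S x by (auto simp: indep_cols_def)
next
  fix c assume h: "\<forall>i\<in>W - {x}. (\<Sum>j\<in>S. c j * M i j) = 0"
  have "\<forall>i\<in>W. (\<Sum>j\<in>S. c j * M i j) = 0"
  proof
    fix i assume "i \<in> W"
    show "(\<Sum>j\<in>S. c j * M i j) = 0"
    proof (cases "i = x")
      case True thus ?thesis using z by simp
    qed (use h \<open>i \<in> W\<close> in auto)
  qed
  thus "\<forall>j\<in>S. c j = 0" using S by (auto simp: indep_cols_def)
qed

lemma row_remove:
  assumes f: "finite W" and S: "indep_cols W M S" and x: "x \<notin> S"
  shows "\<exists>S'. S' \<subseteq> S \<and> card S \<le> card S' + 1 \<and> indep_cols (W - {x}) M S'"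
proof -
  have fS: "finite S" using indep_fin_S[OF f S] .
  have SW: "S \<subseteq> W" using S by (auto simp: indep_cols_def)
  let ?dep = "\<lambda>c. \<forall>i\<in>W - {x}. (\<Sum>j\<in>S. c j * M i j) = 0"
  show ?thesis
  proof (cases "\<forall>c. ?dep c \<longrightarrow> (\<forall>j\<in>S. c j = 0)")
    case True
    hence "indep_cols (W - {x}) M S" using SW x by (auto simp: indep_cols_def)
    thus ?thesis by auto
  next
    case False
    then obtain c0 j0 where c0: "?dep c0" and j0: "j0 \<in> S" and cj0: "c0 j0 \<noteq> 0" by auto
    define \<alpha> where "\<alpha> = (\<Sum>j\<in>S. c0 j * M x j)"
    have a0: "\<alpha> \<noteq> 0"
    proof
      assume "\<alpha> = 0"
      hence "\<forall>i\<in>W. (\<Sum>j\<in>S. c0 j * M i j) = 0" using c0 \<alpha>_def by (metis DiffI empty_iff insert_iff)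
      hence "\<forall>j\<in>S. c0 j = 0" using S by (auto simp: indep_cols_def)
      thus False using j0 cj0 by auto
    qed
    have "indep_cols (W - {x}) M (S - {j0})"
      unfolding indep_cols_def
    proof (intro conjI allI impI ballI)
      show "S - {j0} \<subseteq> W - {x}" using SW x by auto
    next
      fix d j assume hd: "\<forall>i\<in>W - {x}. (\<Sum>j\<in>S - {j0}. d j * M i j) = 0" and j: "j \<in> S - {j0}"
      let ?d = "d(j0 := 0)"
      have sd: "(\<Sum>j\<in>S. ?d j * M i j) = (\<Sum>j\<in>S - {j0}. d j * M i j)" for i
        using fS by (intro sum.mono_neutral_cong_right) auto
      define \<beta> where "\<beta> = (\<Sum>j\<in>S. ?d j * M x j)"
      define e where "e = (\<lambda>j. \<alpha> * ?d j - \<beta> * c0 j)"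
      have se: "(\<Sum>j\<in>S. e j * M i j) = \<alpha> * (\<Sum>j\<in>S. ?d j * M i j) - \<beta> * (\<Sum>j\<in>S. c0 j * M i j)" for i
        unfolding e_def by (simp add: sum_subtractf sum_distrib_left algebra_simps)
      have "\<forall>i\<in>W. (\<Sum>j\<in>S. e j * M i j) = 0"
      proof
        fix i assume i: "i \<in> W"
        show "(\<Sum>j\<in>S. e j * M i j) = 0"
        proof (cases "i = x")
          case True thus ?thesis using se[of x] \<alpha>_def \<beta>_def by simp
        next
          case False
          thus ?thesis using se[of i] sd[of i] hd c0 i by simp
        qed
      qed
      hence e0: "\<forall>j\<in>S. e j = 0" using S by (auto simp: indep_cols_def)
      have "e j0 = 0" using e0 j0 by blast
      hence "\<beta> = 0" using cj0 by (simp add: e_def)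
      have "e j = 0" using e0 j by blast
      hence "\<alpha> * ?d j = 0" using \<open>\<beta> = 0\<close> by (simp add: e_def)
      thus "d j = 0" using a0 j by auto
    qed
    moreover have "card S \<le> card (S - {j0}) + 1" using fS j0 by (simp add: card_Diff_singleton)
    ultimately show ?thesis by blast
  qed
qed

lemma indep_mono_rows: "indep_cols W' M S \<Longrightarrow> W' \<subseteq> W \<Longrightarrow> indep_cols W M S"
  unfolding indep_cols_def by blast

lemma mrank_mono: "finite W \<Longrightarrow> W' \<subseteq> W \<Longrightarrow> mrank W' M \<le> mrank W M"
  by (metis finite_subset indep_mono_rows mrank_ge mrank_obtain)

lemma mrank_del2:
  assumes f: "finite W" and x: "x \<in> W"
  shows "mrank W M \<le> mrank (W - {x}) M + 2"
proof -
  obtain S where S: "indep_cols W M S" "card S = mrank W M" using mrank_obtain[OF f] by blast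
  have S1: "indep_cols W M (S - {x})" using col_remove[OF f S(1)] .
  obtain S' where S': "S' \<subseteq> S - {x}" "card (S - {x}) \<le> card S' + 1" "indep_cols (W - {x}) M S'"
    using row_remove[OF f S1, of x] by blast
  have "card S \<le> card (S - {x}) + 1"
    using indep_fin_S[OF f S(1)] card_gt_0_iff[of S] by (auto simp: card_Diff_singleton_if)
  moreover have "card S' \<le> mrank (W - {x}) M" using mrank_ge[OF _ S'(3)] f by simp
  ultimately show ?thesis using S'(2) S(2) by linarith
qed

lemma mrank_iso:
  assumes f: "finite W" and x: "x \<in> W" and r: "\<forall>j\<in>W. M x j = 0" and c: "\<forall>i\<in>W. M i x = 0"
  shows "mrank W M = mrank (W - {x}) M"
proof (rule antisym)
  show "mrank (W - {x}) M \<le> mrank W M" using mrank_mono[OF f] by blast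
  obtain S where S: "indep_cols W M S" "card S = mrank W M" using mrank_obtain[OF f] by blast
  have SW: "S \<subseteq> W" using S by (auto simp: indep_cols_def)
  have xS: "x \<notin> S"
  proof
    assume xS: "x \<in> S"
    let ?c = "\<lambda>j. if j = x then (1::complex) else 0"
    have Z: "\<forall>i\<in>W. (\<Sum>j\<in>S. ?c j * M i j) = 0"
    proof
      fix i assume i: "i \<in> W"
      have "(\<Sum>j\<in>S. ?c j * M i j) = ?c x * M i x + (\<Sum>j\<in>S - {x}. ?c j * M i j)"
        using xS indep_fin_S[OF f S(1)] by (rule_tac sum.remove) auto
      thus "(\<Sum>j\<in>S. ?c j * M i j) = 0" using c i by simp
    qed
    moreover have H: "\<forall>c. (\<forall>i\<in>W. (\<Sum>j\<in>S. c j * M i j) = 0) \<longrightarrow> (\<forall>j\<in>S. c j = 0)"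
      using S(1) unfolding indep_cols_def by blast
    have "\<forall>j\<in>S. ?c j = 0" using spec[OF H, of ?c] Z by (rule mp)
    thus False using xS by auto
  qed
  have "indep_cols (W - {x}) M S" using zero_row_remove[OF S(1) _ xS] r SW by blast
  from mrank_ge[OF _ this] f S(2) show "mrank W M \<le> mrank (W - {x}) M" by simp
qed

lemma mrank_pend:
  assumes f: "finite W" and x: "x \<in> W" and y: "y \<in> W" and xy: "x \<noteq> y"
    and mxy: "M x y \<noteq> 0" and myx: "M y x \<noteq> 0"
    and r: "\<forall>j\<in>W. j \<noteq> y \<longrightarrow> M x j = 0" and c: "\<forall>i\<in>W. i \<noteq> y \<longrightarrow> M i x = 0"
  shows "mrank W M = mrank (W - {x, y}) M + 2"
proof (rule antisym)
  obtain S where S: "indep_cols (W - {x, y}) M S" "card S = mrank (W - {x, y}) M"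
    using mrank_obtain[of "W - {x,y}"] f by auto
  have SW: "S \<subseteq> W - {x, y}" using S by (auto simp: indep_cols_def)
  have fS: "finite S" using SW f finite_subset by blast
  have mxx: "M x x = 0" using r x xy by blast
  have "indep_cols W M (insert x (insert y S))"
    unfolding indep_cols_def
  proof (intro conjI allI impI)
    show "insert x (insert y S) \<subseteq> W" using SW x y by auto
  next
    fix c assume h: "\<forall>i\<in>W. (\<Sum>j\<in>insert x (insert y S). c j * M i j) = 0"
    have sm: "(\<Sum>j\<in>insert x (insert y S). c j * M i j) = c x * M i x + c y * M i y + (\<Sum>j\<in>S. c j * M i j)" for i
    proof -
      have "x \<notin> S" "y \<notin> S" using SW by auto
      thus ?thesis using fS xy by (simp add: sum.insert_if)
    qed
    have sx: "(\<Sum>j\<in>S. c j * M x j) = 0" using r SW by (intro sum.neutral) auto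
    have "c y * M x y = 0" using h[rule_format, OF x] sm[of x] sx mxx by simp
    hence cy: "c y = 0" using mxy by simp
    have "\<forall>i\<in>W - {x, y}. (\<Sum>j\<in>S. c j * M i j) = 0"
    proof
      fix i assume i: "i \<in> W - {x, y}"
      have "M i x = 0" using c i by auto
      thus "(\<Sum>j\<in>S. c j * M i j) = 0" using h i sm[of i] cy by auto
    qed
    hence cS: "\<forall>j\<in>S. c j = 0" using S(1) unfolding indep_cols_def by blast
    have "(\<Sum>j\<in>S. c j * M y j) = 0" using cS by simp
    hence "c x * M y x = 0" using h[rule_format, OF y] sm[of y] cy by simp
    hence "c x = 0" using myx by simp
    thus "\<forall>j\<in>insert x (insert y S). c j = 0" using cS cy by auto
  qed
  from mrank_ge[OF f this] have "card (insert x (insert y S)) \<le> mrank W M" .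
  moreover have "card (insert x (insert y S)) = card S + 2"
  proof -
    have "x \<notin> S" "y \<notin> S" using SW by auto
    thus ?thesis using fS xy by simp
  qed
  ultimately show "mrank (W - {x, y}) M + 2 \<le> mrank W M" using S(2) by simp
next
  obtain S where S: "indep_cols W M S" "card S = mrank W M" using mrank_obtain[OF f] by blast
  have SW: "S \<subseteq> W" using S by (auto simp: indep_cols_def)
  have fS: "finite S" using SW f finite_subset by blast
  have mxx: "M x x = 0" using r x xy by blast
  show "mrank W M \<le> mrank (W - {x, y}) M + 2"
  proof (cases "x \<in> S")
    case True
    let ?T = "S - {x, y}"
    have "indep_cols (W - {x, y}) M ?T"
      unfolding indep_cols_def
    proof (intro conjI allI impI)
      show "?T \<subseteq> W - {x, y}" using SW by auto
    next
      fix d assume h: "\<forall>i\<in>W - {x, y}. (\<Sum>j\<in>?T. d j * M i j) = 0"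
      define \<beta> where "\<beta> = (\<Sum>j\<in>?T. d j * M y j)"
      define cc where "cc = (\<lambda>j. if j = x then - \<beta> / M y x else if j = y then 0 else d j)"
      have sm: "(\<Sum>j\<in>S. cc j * M i j) = cc x * M i x + (\<Sum>j\<in>?T. d j * M i j)" for i
      proof -
        have "(\<Sum>j\<in>S. cc j * M i j) = (\<Sum>j\<in>insert x ?T. cc j * M i j)"
          using fS True by (intro sum.mono_neutral_cong_right) (auto simp: cc_def)
        also have "\<dots> = cc x * M i x + (\<Sum>j\<in>?T. cc j * M i j)" using fS by simp
        also have "(\<Sum>j\<in>?T. cc j * M i j) = (\<Sum>j\<in>?T. d j * M i j)"
          by (rule sum.cong) (auto simp: cc_def)
        finally show ?thesis .
      qed
      have "\<forall>i\<in>W. (\<Sum>j\<in>S. cc j * M i j) = 0"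
      proof
        fix i assume i: "i \<in> W"
        consider "i = x" | "i = y" | "i \<in> W - {x, y}" using i by blast
        thus "(\<Sum>j\<in>S. cc j * M i j) = 0"
        proof cases
          case 1
          have "(\<Sum>j\<in>?T. d j * M x j) = 0" using r SW by (intro sum.neutral) auto
          thus ?thesis using sm[of x] mxx 1 by simp
        next
          case 2
          thus ?thesis using sm[of y] myx xy by (simp add: cc_def \<beta>_def)
        next
          case 3
          thus ?thesis using sm[of i] h c by auto
        qed
      qed
      hence "\<forall>j\<in>S. cc j = 0" using S(1) unfolding indep_cols_def by blast
      hence cc0: "\<forall>j\<in>S. cc j = 0" .
      show "\<forall>j\<in>?T. d j = 0"
      proof
        fix j assume j: "j \<in> ?T"
        hence "cc j = 0" using cc0 by blast
        moreover have "cc j = d j" using j by (simp add: cc_def)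
        ultimately show "d j = 0" by simp
      qed
    qed
    from mrank_ge[OF _ this] f have "card ?T \<le> mrank (W - {x, y}) M" by simp
    moreover have "card S \<le> card ?T + 2"
    proof -
      have "S \<subseteq> ?T \<union> {x, y}" by auto
      hence "card S \<le> card (?T \<union> {x, y})" using fS by (intro card_mono) auto
      also have "\<dots> \<le> card ?T + card {x, y}" by (rule card_Un_le)
      also have "\<dots> \<le> card ?T + 2" by (simp add: card_insert_if)
      finally show ?thesis .
    qed
    ultimately show ?thesis using S(2) by simp
  next
    case False
    let ?T = "S - {y}"
    have T: "indep_cols W M ?T" using col_remove[OF f S(1)] .
    obtain T' where T': "T' \<subseteq> ?T" "card ?T \<le> card T' + 1" "indep_cols (W - {y}) M T'"
      using row_remove[OF f T, of y] by blast
    have "indep_cols (W - {y} - {x}) M T'"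
      using zero_row_remove[OF T'(3)] T'(1) False r SW by blast
    moreover have "W - {y} - {x} = W - {x, y}" by auto
    ultimately have "card T' \<le> mrank (W - {x, y}) M" using mrank_ge[of "W - {x,y}"] f by simp
    moreover have "card S \<le> card ?T + 1" using fS card_gt_0_iff[of S]
      by (auto simp: card_Diff_singleton_if)
    ultimately show ?thesis using S(2) T'(2) by simp
  qed
qed



definition ccomp :: "'a set \<Rightarrow> ('a \<Rightarrow> 'a \<Rightarrow> bool) \<Rightarrow> 'a \<Rightarrow> 'a set" where
  "ccomp W E a = {b \<in> W. reach W E a b}"

definition nbr :: "'a set \<Rightarrow> ('a \<Rightarrow> 'a \<Rightarrow> bool) \<Rightarrow> 'a \<Rightarrow> 'a set" where
  "nbr W E x = {y \<in> W. E x y}"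

definition symE :: "('a \<Rightarrow> 'a \<Rightarrow> bool) \<Rightarrow> bool" where
  "symE E \<longleftrightarrow> (\<forall>x y. E x y \<longrightarrow> E y x) \<and> (\<forall>x. \<not> E x x)"

lemma nc_comp: "num_components W E = card (ccomp W E ` W)"
  by (simp add: num_components_def ccomp_def)

lemma reach_mono: "W' \<subseteq> W \<Longrightarrow> reach W' E a b \<Longrightarrow> reach W E a b"
  unfolding reach_def by (erule rtranclp_mono[THEN predicate2D, rotated]) auto

lemma reach_trans: "reach W E a b \<Longrightarrow> reach W E b c \<Longrightarrow> reach W E a c"
  unfolding reach_def by (rule rtranclp_trans)

lemma reach_step: "a \<in> W \<Longrightarrow> b \<in> W \<Longrightarrow> E a b \<Longrightarrow> reach W E a b"
  unfolding reach_def by auto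

lemma reach_refl: "reach W E a a"
  unfolding reach_def by auto

lemma reach_sym:
  assumes s: "symE E" and r: "reach W E a b" shows "reach W E b a"
  using r unfolding reach_def
proof (induction rule: rtranclp_induct)
  case base thus ?case by simp
next
  case (step y z)
  hence "(\<lambda>x y. x \<in> W \<and> y \<in> W \<and> E x y) z y" using s by (auto simp: symE_def)
  thus ?case using step(3) by (rule converse_rtranclp_into_rtranclp)
qed

lemma reach_cases: "reach W E a b \<Longrightarrow> a = b \<or> (a \<in> W \<and> b \<in> W)"
  unfolding reach_def by (induction rule: rtranclp_induct) auto

lemma comp_eq: "symE E \<Longrightarrow> reach W E a b \<Longrightarrow> ccomp W E a = ccomp W E b"
proof -
  assume s: "symE E" and r: "reach W E a b"
  have "reach W E a c \<longleftrightarrow> reach W E b c" for c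
    using reach_trans[OF r, of c] reach_trans[OF reach_sym[OF s r], of c] by blast
  thus ?thesis unfolding ccomp_def by simp
qed

lemma comp_eqD: "b \<in> W \<Longrightarrow> ccomp W E a = ccomp W E b \<Longrightarrow> reach W E a b"
proof -
  assume b: "b \<in> W" and e: "ccomp W E a = ccomp W E b"
  have "b \<in> ccomp W E b" using b reach_refl by (simp add: ccomp_def)
  hence "b \<in> ccomp W E a" using e by simp
  thus ?thesis by (simp add: ccomp_def)
qed

lemma avoid:
  assumes s: "symE E" and r: "reach W E a b" and nr: "\<not> reach W E x a"
  shows "reach (W - {x}) E a b"
  using r unfolding reach_def
proof (induction rule: rtranclp_induct)
  case base thus ?case by simp
next
  case (step y z)
  have ry: "reach W E a y" using step(1) unfolding reach_def .
  have "y \<noteq> x"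
  proof
    assume "y = x" thus False using reach_sym[OF s ry] nr by simp
  qed
  moreover have "z \<noteq> x"
  proof
    assume "z = x"
    hence "reach W E y x" using step(2) by (auto intro: reach_step)
    hence "reach W E a x" using reach_trans[OF ry] by simp
    thus False using nr reach_sym[OF s, of W a x] by simp
  qed
  ultimately have "(\<lambda>x' y'. x' \<in> W - {x} \<and> y' \<in> W - {x} \<and> E x' y') y z" using step(2) by auto
  with step(3) show ?case by (rule rtranclp.rtrancl_into_rtrancl)
qed

lemma from_x:
  assumes r: "reach W E x a"
  shows "a = x \<or> (\<exists>n\<in>nbr W E x. reach (W - {x}) E n a)"
  using r unfolding reach_def
proof (induction rule: rtranclp_induct)
  case base thus ?case by simp
next
  case (step y z)
  show ?case
  proof (cases "z = x")
    case True thus ?thesis by simp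
  next
    case zx: False
    show ?thesis
    proof (cases "y = x")
      case True
      hence "z \<in> nbr W E x" using step(2) by (auto simp: nbr_def)
      thus ?thesis using reach_refl by blast
    next
      case False
      then obtain n where n: "n \<in> nbr W E x" "reach (W - {x}) E n y" using step(3) unfolding reach_def by blast
      have "reach (W - {x}) E y z" using step(2) False zx by (intro reach_step) auto
      hence "reach (W - {x}) E n z" using reach_trans[OF n(2)] by simp
      hence "(\<lambda>xa y. xa \<in> W - {x} \<and> y \<in> W - {x} \<and> E xa y)\<^sup>*\<^sup>* n z" unfolding reach_def .
      thus ?thesis using n(1) by blast
    qed
  qed
qed

lemma comp_count:
  assumes f: "finite W" and x: "x \<in> W" and s: "symE E"
  shows "num_components W E + card (ccomp (W - {x}) E ` nbr W E x) = num_components (W - {x}) E + 1"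
proof -
  let ?W' = "W - {x}"
  let ?N = "nbr W E x"
  define A where "A = {a \<in> ?W'. reach W E x a}"
  define B where "B = ?W' - A"
  have W': "?W' = A \<union> B" by (auto simp: A_def B_def)
  have NA: "?N \<subseteq> A" using s by (auto simp: nbr_def A_def symE_def x intro: reach_step)
  have cA: "ccomp ?W' E ` A = ccomp ?W' E ` ?N"
  proof
    show "ccomp ?W' E ` ?N \<subseteq> ccomp ?W' E ` A" using NA by auto
    show "ccomp ?W' E ` A \<subseteq> ccomp ?W' E ` ?N"
    proof
      fix C assume "C \<in> ccomp ?W' E ` A"
      then obtain a where a: "a \<in> A" "C = ccomp ?W' E a" by auto
      then obtain n where n: "n \<in> ?N" "reach ?W' E n a" using from_x[of W E x a] by (auto simp: A_def)
      hence "C = ccomp ?W' E n" using a comp_eq[OF s] by metis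
      thus "C \<in> ccomp ?W' E ` ?N" using n by auto
    qed
  qed
  have disj: "ccomp ?W' E ` A \<inter> ccomp ?W' E ` B = {}"
  proof (rule ccontr)
    assume "ccomp ?W' E ` A \<inter> ccomp ?W' E ` B \<noteq> {}"
    then obtain a b where ab: "a \<in> A" "b \<in> B" "ccomp ?W' E a = ccomp ?W' E b" by auto
    have "b \<in> ?W'" using ab by (auto simp: B_def)
    hence "reach ?W' E a b" using comp_eqD ab by metis
    hence rab: "reach W E a b" by (rule reach_mono[rotated]) auto
    have "reach W E x a" using ab(1) by (simp add: A_def)
    hence "reach W E x b" using reach_trans[OF _ rab] by simp
    thus False using ab(2) \<open>b \<in> ?W'\<close> by (auto simp: A_def B_def)
  qed
  have finA: "finite A" "finite B" using f by (auto simp: A_def B_def)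
  have "ccomp ?W' E ` A \<union> ccomp ?W' E ` B = ccomp ?W' E ` (A \<union> B)" by (rule image_Un[symmetric])
  also have "\<dots> = ccomp ?W' E ` ?W'" by (simp only: W'[symmetric])
  finally have un: "ccomp ?W' E ` ?W' = ccomp ?W' E ` A \<union> ccomp ?W' E ` B" by simp
  have c1: "num_components ?W' E = card (ccomp ?W' E ` ?N) + card (ccomp ?W' E ` B)"
    unfolding nc_comp un using card_Un_disjoint[OF finite_imageI finite_imageI disj] finA cA by simp
  have cB: "ccomp W E ` B = ccomp ?W' E ` B"
  proof (rule image_cong[OF refl])
    fix b assume b: "b \<in> B"
    hence "\<not> reach W E x b" "b \<in> ?W'" by (auto simp: A_def B_def)
    show "ccomp W E b = ccomp ?W' E b"
    proof
      show "ccomp W E b \<subseteq> ccomp ?W' E b"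
      proof
        fix c assume "c \<in> ccomp W E b"
        hence c: "c \<in> W" "reach W E b c" by (auto simp: ccomp_def)
        have r: "reach ?W' E b c" using avoid[OF s c(2) \<open>\<not> reach W E x b\<close>] .
        have "c \<noteq> x"
        proof
          assume "c = x"
          hence "reach W E x b" using c(2) reach_sym[OF s] by simp
          thus False using \<open>\<not> reach W E x b\<close> by simp
        qed
        thus "c \<in> ccomp ?W' E b" using c r by (simp add: ccomp_def)
      qed
      show "ccomp ?W' E b \<subseteq> ccomp W E b"
        unfolding ccomp_def using reach_mono[of ?W' W E b] by auto
    qed
  qed
  have cW: "ccomp W E ` W = insert (ccomp W E x) (ccomp W E ` B)"
  proof -
    have "W = insert x (A \<union> B)" using W' x by auto
    moreover have "ccomp W E ` A \<subseteq> {ccomp W E x}"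
      using comp_eq[OF s] by (auto simp: A_def)
    ultimately show ?thesis by auto
  qed
  have xB: "ccomp W E x \<notin> ccomp W E ` B"
  proof
    assume "ccomp W E x \<in> ccomp W E ` B"
    then obtain b where b: "b \<in> B" "ccomp W E x = ccomp W E b" by auto
    hence "reach W E x b" using comp_eqD by (metis B_def DiffD1)
    thus False using b by (auto simp: A_def B_def)
  qed
  have c2: "num_components W E = card (ccomp ?W' E ` B) + 1"
    unfolding nc_comp cW using xB finA cB by simp
  show ?thesis using c1 c2 by simp
qed

lemma edge_count:
  assumes f: "finite W" and x: "x \<in> W" and s: "symE E"
  shows "card (edge_set W E) = card (edge_set (W - {x}) E) + card (nbr W E x)"
proof -
  let ?N = "nbr W E x"
  have eq: "edge_set W E = edge_set (W - {x}) E \<union> (\<lambda>b. {x, b}) ` ?N"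
  proof
    show "edge_set W E \<subseteq> edge_set (W - {x}) E \<union> (\<lambda>b. {x, b}) ` ?N"
    proof
      fix e assume "e \<in> edge_set W E"
      then obtain a b where ab: "e = {a, b}" "a \<in> W" "b \<in> W" "E a b" by (auto simp: edge_set_def)
      show "e \<in> edge_set (W - {x}) E \<union> (\<lambda>b. {x, b}) ` ?N"
      proof (cases "a = x \<or> b = x")
        case True
        thus ?thesis
        proof
          assume "a = x" thus ?thesis using ab by (auto simp: nbr_def)
        next
          assume "b = x"
          hence "e = {x, a}" "a \<in> ?N" using ab s by (auto simp: nbr_def symE_def)
          thus ?thesis by auto
        qed
      next
        case False thus ?thesis using ab by (auto simp: edge_set_def)
      qed
    qed
    show "edge_set (W - {x}) E \<union> (\<lambda>b. {x, b}) ` ?N \<subseteq> edge_set W E"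
      using x by (auto simp: edge_set_def nbr_def)
  qed
  have d1: "\<forall>e\<in>edge_set (W - {x}) E. x \<notin> e" by (auto simp: edge_set_def)
  have d2: "\<forall>e\<in>(\<lambda>b. {x, b}) ` ?N. x \<in> e" by auto
  have disj: "edge_set (W - {x}) E \<inter> (\<lambda>b. {x, b}) ` ?N = {}"
    using d1 d2 by blast
  have inj: "inj_on (\<lambda>b. {x, b}) ?N"
  proof (rule inj_onI)
    fix b b' assume b: "b \<in> ?N" "b' \<in> ?N" "{x, b} = {x, b'}"
    have "b \<noteq> x" using b(1) s by (auto simp: nbr_def symE_def)
    moreover have "b \<in> {x, b'}" using b(3) by blast
    ultimately show "b = b'" by simp
  qed
  have fe: "finite (edge_set (W - {x}) E)"
    by (rule finite_subset[of _ "Pow W"]) (auto simp: edge_set_def f)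
  have fN: "finite ?N" using f by (auto simp: nbr_def)
  show ?thesis unfolding eq using card_Un_disjoint[OF fe finite_imageI[OF fN] disj] card_image[OF inj] by simp
qed

lemma theta_del:
  assumes f: "finite W" and x: "x \<in> W" and s: "symE E"
  shows "theta (W - {x}) E = theta W E - int (card (nbr W E x)) + int (card (ccomp (W - {x}) E ` nbr W E x))"
proof -
  have "card W = card (W - {x}) + 1" using card.remove[OF f x] by simp
  thus ?thesis using edge_count[OF assms] comp_count[OF assms] unfolding theta_def by simp
qed

lemma nbr_comp_le: "finite W \<Longrightarrow> card (ccomp W' E ` nbr W E x) \<le> card (nbr W E x)"
  by (rule card_image_le) (auto simp: nbr_def)

lemma card_image_merge:
  assumes "finite N" "a \<in> N" "b \<in> N" "a \<noteq> b" "f a = f b"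
  shows "card (f ` N) + 1 \<le> card N"
proof -
  have "f ` N = f ` (N - {a})"
  proof
    show "f ` (N - {a}) \<subseteq> f ` N" by auto
    show "f ` N \<subseteq> f ` (N - {a})"
    proof
      fix z assume "z \<in> f ` N"
      then obtain c where c: "c \<in> N" "z = f c" by auto
      show "z \<in> f ` (N - {a})"
      proof (cases "c = a")
        case True
        hence "z = f b" using c assms(5) by simp
        thus ?thesis using assms(3,4) by auto
      next
        case False thus ?thesis using c by auto
      qed
    qed
  qed
  moreover have "card (f ` (N - {a})) \<le> card (N - {a})" using assms by (intro card_image_le) auto
  moreover have "card (N - {a}) + 1 = card N" using card.remove[OF assms(1,2)] by simp
  ultimately show ?thesis by simp
qed

definition ispath :: "'a set \<Rightarrow> ('a \<Rightarrow> 'a \<Rightarrow> bool) \<Rightarrow> 'a list \<Rightarrow> bool" where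
  "ispath W E xs \<longleftrightarrow> xs \<noteq> [] \<and> distinct xs \<and> set xs \<subseteq> W \<and> (\<forall>i. Suc i < length xs \<longrightarrow> E (xs ! i) (xs ! Suc i))"

lemma path_reach:
  assumes e: "\<forall>i. Suc i < length xs \<longrightarrow> E (xs ! i) (xs ! Suc i)"
  shows "p \<le> j \<Longrightarrow> j < length xs \<Longrightarrow> (\<forall>i. p \<le> i \<and> i \<le> j \<longrightarrow> xs ! i \<in> W) \<Longrightarrow> reach W E (xs ! p) (xs ! j)"
proof (induction j)
  case 0 thus ?case using reach_refl by simp
next
  case (Suc j)
  show ?case
  proof (cases "p = Suc j")
    case True thus ?thesis using reach_refl by simp
  next
    case False
    hence "reach W E (xs ! p) (xs ! j)" using Suc by auto
    moreover have "reach W E (xs ! j) (xs ! Suc j)"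
      using Suc.prems e False by (intro reach_step) auto
    ultimately show ?thesis by (rule reach_trans)
  qed
qed

lemma good_vertex:
  assumes f: "finite W" and ne: "W \<noteq> {}" and s: "symE E"
  shows "\<exists>x\<in>W. nbr W E x = {} \<or> (\<exists>y. nbr W E x = {y}) \<or>
           (\<exists>a b. a \<in> nbr W E x \<and> b \<in> nbr W E x \<and> a \<noteq> b \<and> reach (W - {x}) E a b)"
proof -
  let ?P = "{xs. ispath W E xs}"
  have fP: "finite ?P"
  proof (rule finite_subset)
    show "?P \<subseteq> {xs. set xs \<subseteq> W \<and> length xs \<le> card W}"
    proof
      fix ys assume "ys \<in> ?P"
      hence ys: "distinct ys" "set ys \<subseteq> W" by (auto simp: ispath_def)
      have "length ys = card (set ys)" using distinct_card[OF ys(1)] by simp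
      also have "\<dots> \<le> card W" using card_mono[OF f ys(2)] .
      finally show "ys \<in> {xs. set xs \<subseteq> W \<and> length xs \<le> card W}" using ys by simp
    qed
    show "finite {xs. set xs \<subseteq> W \<and> length xs \<le> card W}" by (rule finite_lists_length_le[OF f])
  qed
  obtain w where w: "w \<in> W" using ne by auto
  have "[w] \<in> ?P" using w by (simp add: ispath_def)
  hence "Max (length ` ?P) \<in> length ` ?P" using fP by (intro Max_in) auto
  then obtain xs where xs: "ispath W E xs" "length xs = Max (length ` ?P)" by auto
  have mx: "ispath W E ys \<Longrightarrow> length ys \<le> length xs" for ys using xs(2) fP by simp
  define x where "x = xs ! 0"
  have xs0: "xs \<noteq> []" "distinct xs" "set xs \<subseteq> W" "\<forall>i. Suc i < length xs \<longrightarrow> E (xs ! i) (xs ! Suc i)"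
    using xs(1) by (auto simp: ispath_def)
  have xW: "x \<in> W" using xs0 by (auto simp: x_def)
  have Nsub: "nbr W E x \<subseteq> set xs"
  proof
    fix y assume y: "y \<in> nbr W E x"
    show "y \<in> set xs"
    proof (rule ccontr)
      assume ny: "y \<notin> set xs"
      have "ispath W E (y # xs)"
        unfolding ispath_def
      proof (intro conjI allI impI)
        show "distinct (y # xs)" using ny xs0 by simp
        show "set (y # xs) \<subseteq> W" using y xs0 by (auto simp: nbr_def)
        fix i assume i: "Suc i < length (y # xs)"
        show "E ((y # xs) ! i) ((y # xs) ! Suc i)"
        proof (cases i)
          case 0 thus ?thesis using y s by (auto simp: nbr_def x_def symE_def)
        next
          case (Suc k) thus ?thesis using i xs0 by auto
        qed
      qed simp
      from mx[OF this] show False by simp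
    qed
  qed
  show ?thesis
  proof (cases "card (nbr W E x) \<le> 1")
    case True
    moreover have fN: "finite (nbr W E x)" using f by (simp add: nbr_def)
    ultimately have "card (nbr W E x) = 0 \<or> card (nbr W E x) = 1" by linarith
    hence "nbr W E x = {} \<or> (\<exists>y. nbr W E x = {y})"
      using fN card_1_singleton_iff[of "nbr W E x"] by auto
    thus ?thesis using xW by blast
  next
    case False
    then obtain a b where ab: "a \<in> nbr W E x" "b \<in> nbr W E x" "a \<noteq> b"
      using card_le_Suc0_iff_eq[of "nbr W E x"] f by (auto simp: nbr_def)
    have nx: "\<And>c. c \<in> nbr W E x \<Longrightarrow> \<exists>i. 1 \<le> i \<and> i < length xs \<and> xs ! i = c"
    proof -
      fix c assume c: "c \<in> nbr W E x"
      then obtain i where i: "i < length xs" "xs ! i = c" using Nsub by (metis in_set_conv_nth subsetD)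
      have "c \<noteq> x" using c s by (auto simp: nbr_def symE_def)
      hence "i \<noteq> 0"
      proof (rule contrapos_nn)
        assume "i = 0" thus "c = x" using i by (simp add: x_def)
      qed
      hence "1 \<le> i \<and> i < length xs \<and> xs ! i = c" using i by linarith
      thus "\<exists>i. 1 \<le> i \<and> i < length xs \<and> xs ! i = c" by blast
    qed
    have r1: "reach (W - {x}) E (xs ! 1) c" if c: "c \<in> nbr W E x" for c
    proof -
      obtain i where i: "1 \<le> i" "i < length xs" "xs ! i = c" using nx[OF c] by blast
      have "\<forall>k. 1 \<le> k \<and> k \<le> i \<longrightarrow> xs ! k \<in> W - {x}"
      proof (intro allI impI)
        fix k assume k: "1 \<le> k \<and> k \<le> i"
        have "xs ! k \<in> W" using xs0 k i by (auto intro: nth_mem)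
        moreover have "xs ! k \<noteq> xs ! 0" using xs0 k i by (simp add: nth_eq_iff_index_eq)
        ultimately show "xs ! k \<in> W - {x}" by (simp add: x_def)
      qed
      from path_reach[OF xs0(4) i(1) i(2) this] show ?thesis using i by simp
    qed
    have "reach (W - {x}) E a b" using reach_trans[OF reach_sym[OF s r1[OF ab(1)]] r1[OF ab(2)]] .
    hence "\<exists>a b. a \<in> nbr W E x \<and> b \<in> nbr W E x \<and> a \<noteq> b \<and> reach (W - {x}) E a b"
      using ab(1) ab(2) ab(3) by (intro exI[of _ a] exI[of _ b] conjI)
    thus ?thesis by (intro bexI[OF _ xW] disjI2)
  qed
qed



definition pat :: "('a \<Rightarrow> 'a \<Rightarrow> bool) \<Rightarrow> ('a \<Rightarrow> 'a \<Rightarrow> complex) \<Rightarrow> bool" where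
  "pat E M \<longleftrightarrow> (\<forall>i j. (M i j \<noteq> 0) = E i j)"

lemma mrank_empty: "mrank {} M = 0"
  using mrank_obtain[of "{}" M] by (auto simp: indep_cols_def)

lemma theta_empty: "theta {} E = 0"
  by (simp add: theta_def edge_set_def num_components_def)

lemma rank_iso_pat:
  assumes f: "finite W" and x: "x \<in> W" and s: "symE E" and p: "pat E M" and n: "nbr W E x = {}"
  shows "mrank W M = mrank (W - {x}) M"
proof (rule mrank_iso[OF f x])
  show "\<forall>j\<in>W. M x j = 0" using n p by (auto simp: nbr_def pat_def)
  show "\<forall>i\<in>W. M i x = 0"
  proof
    fix i assume i: "i \<in> W"
    show "M i x = 0"
    proof (rule ccontr)
      assume "M i x \<noteq> 0"
      hence "E x i" using p s by (auto simp: pat_def symE_def)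
      thus False using n i by (auto simp: nbr_def)
    qed
  qed
qed

lemma rank_pend_pat:
  assumes f: "finite W" and x: "x \<in> W" and s: "symE E" and p: "pat E M" and n: "nbr W E x = {y}"
  shows "mrank W M = mrank (W - {x, y}) M + 2"
proof -
  have y: "y \<in> W" "E x y" using n by (auto simp: nbr_def)
  have xy: "x \<noteq> y" using y s by (auto simp: symE_def)
  show ?thesis
  proof (rule mrank_pend[OF f x y(1) xy])
    show "M x y \<noteq> 0" "M y x \<noteq> 0" using y p s by (auto simp: pat_def symE_def)
    show "\<forall>j\<in>W. j \<noteq> y \<longrightarrow> M x j = 0" using n p by (auto simp: nbr_def pat_def)
    show "\<forall>i\<in>W. i \<noteq> y \<longrightarrow> M i x = 0" using n p s by (auto simp: nbr_def pat_def symE_def)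
  qed
qed

lemma theta_pend:
  assumes f: "finite W" and x: "x \<in> W" and s: "symE E" and n: "nbr W E x = {y}"
  shows "theta (W - {x}) E = theta W E" "theta (W - {x, y}) E \<le> theta W E"
proof -
  show t1: "theta (W - {x}) E = theta W E" using theta_del[OF f x s] n by simp
  have y: "y \<in> W - {x}" using n s by (auto simp: nbr_def symE_def)
  have "W - {x, y} = W - {x} - {y}" by auto
  hence "theta (W - {x, y}) E = theta (W - {x}) E - int (card (nbr (W - {x}) E y))
           + int (card (ccomp (W - {x} - {y}) E ` nbr (W - {x}) E y))"
    using theta_del[OF _ y s] f by simp
  moreover have "card (ccomp (W - {x} - {y}) E ` nbr (W - {x}) E y) \<le> card (nbr (W - {x}) E y)"
    using f by (intro nbr_comp_le) simp
  ultimately show "theta (W - {x, y}) E \<le> theta W E" using t1 by simp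
qed

lemma bound:
  "finite W \<Longrightarrow> symE E \<Longrightarrow> pat E P \<Longrightarrow> pat E Q \<Longrightarrow>
   int (mrank W P) \<le> int (mrank W Q) + 2 * theta W E \<and> int (mrank W Q) - 2 * theta W E \<le> int (mrank W P)"
proof (induction "card W" arbitrary: W rule: less_induct)
  case less
  note f = less.prems(1) and s = less.prems(2) and p = less.prems(3) and q = less.prems(4)
  show ?case
  proof (cases "W = {}")
    case True thus ?thesis by (simp add: mrank_empty theta_empty)
  next
    case False
    then obtain x where x: "x \<in> W" and cs: "nbr W E x = {} \<or> (\<exists>y. nbr W E x = {y}) \<or>
           (\<exists>a b. a \<in> nbr W E x \<and> b \<in> nbr W E x \<and> a \<noteq> b \<and> reach (W - {x}) E a b)"
      using good_vertex[OF f _ s] by blast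
    have lt: "card (W - {x}) < card W" using f x by (meson card_Diff1_less)
    from cs show ?thesis
    proof (elim disjE exE conjE)
      assume n: "nbr W E x = {}"
      have IH: "int (mrank (W - {x}) P) \<le> int (mrank (W - {x}) Q) + 2 * theta (W - {x}) E \<and>
          int (mrank (W - {x}) Q) - 2 * theta (W - {x}) E \<le> int (mrank (W - {x}) P)"
        using less.hyps[OF lt] f s p q by simp
      have "theta (W - {x}) E = theta W E" using theta_del[OF f x s] n by simp
      thus ?thesis using IH rank_iso_pat[OF f x s p n] rank_iso_pat[OF f x s q n] by simp
    next
      fix y assume n: "nbr W E x = {y}"
      have y: "y \<in> W" using n by (auto simp: nbr_def)
      have "card (W - {x, y}) \<le> card (W - {x})" using f by (intro card_mono) auto
      hence lt2: "card (W - {x, y}) < card W" using lt by simp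
      have IH: "int (mrank (W - {x, y}) P) \<le> int (mrank (W - {x, y}) Q) + 2 * theta (W - {x, y}) E \<and>
          int (mrank (W - {x, y}) Q) - 2 * theta (W - {x, y}) E \<le> int (mrank (W - {x, y}) P)"
        using less.hyps[OF lt2] f s p q by simp
      thus ?thesis using rank_pend_pat[OF f x s p n] rank_pend_pat[OF f x s q n] theta_pend(2)[OF f x s n]
        by simp
    next
      fix a b assume ab: "a \<in> nbr W E x" "b \<in> nbr W E x" "a \<noteq> b" "reach (W - {x}) E a b"
      have IH: "int (mrank (W - {x}) P) \<le> int (mrank (W - {x}) Q) + 2 * theta (W - {x}) E \<and>
          int (mrank (W - {x}) Q) - 2 * theta (W - {x}) E \<le> int (mrank (W - {x}) P)"
        using less.hyps[OF lt] f s p q by simp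
      have "card (ccomp (W - {x}) E ` nbr W E x) + 1 \<le> card (nbr W E x)"
        by (rule card_image_merge[OF _ ab(1) ab(2) ab(3) comp_eq[OF s ab(4)]]) (simp add: nbr_def f)
      hence th: "theta (W - {x}) E \<le> theta W E - 1" using theta_del[OF f x s] by simp
      have "mrank W P \<le> mrank (W - {x}) P + 2" "mrank W Q \<le> mrank (W - {x}) Q + 2"
        using mrank_del2[OF f x] by auto
      moreover have "mrank (W - {x}) P \<le> mrank W P" "mrank (W - {x}) Q \<le> mrank W Q"
        using mrank_mono[OF f] by auto
      ultimately show ?thesis using IH th by linarith
    qed
  qed
qed



lemma cycle_merge:
  assumes sg: "simple_graph V E" and u: "u \<in> V" and nu: "{w \<in> V. E u w} = {v}"
    and cyc: "on_cycle V E v"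
  shows "\<exists>a b. a \<in> nbr (V - {u}) E v \<and> b \<in> nbr (V - {u}) E v \<and> a \<noteq> b \<and> reach (V - {u} - {v}) E a b"
proof -
  have s: "\<forall>x y. E x y \<longrightarrow> E y x" using sg by (simp add: simple_graph_def)
  obtain xs where xs: "length xs \<ge> 3" "distinct xs" "set xs \<subseteq> V" "hd xs = v"
    "\<forall>i. Suc i < length xs \<longrightarrow> E (xs ! i) (xs ! Suc i)" "E (last xs) (hd xs)"
    using cyc unfolding on_cycle_def by blast
  define n where "n = length xs"
  have ne: "xs \<noteq> []" using xs(1) by auto
  have x0: "xs ! 0 = v" using xs(4) ne by (simp add: hd_conv_nth)
  have lastn: "last xs = xs ! (n - 1)" using ne by (simp add: last_conv_nth n_def)
  have inV: "i < n \<Longrightarrow> xs ! i \<in> V" for i using xs(3) by (auto simp: n_def)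
  have nv: "1 \<le> i \<Longrightarrow> i < n \<Longrightarrow> xs ! i \<noteq> v" for i
    using x0 nth_eq_iff_index_eq[OF xs(2), of i 0] ne by (auto simp: n_def)
  have uv: "E u w \<Longrightarrow> w \<in> V \<Longrightarrow> w = v" for w using nu by blast
  have nu': "xs ! i \<noteq> u" if i: "1 \<le> i" "i < n" for i
  proof
    assume xu: "xs ! i = u"
    show False
    proof (cases "Suc i < n")
      case True
      hence "E u (xs ! Suc i)" using xs(5) xu by (auto simp: n_def)
      hence "xs ! Suc i = v" using uv inV[OF True] by blast
      thus False using nv[of "Suc i"] True by simp
    next
      case False
      hence iv: "i = n - 1" using i by simp
      have "Suc (n - 2) < length xs" using xs(1) by (simp add: n_def)
      hence "E (xs ! (n - 2)) (xs ! Suc (n - 2))" using xs(5) by blast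
      moreover have "Suc (n - 2) = i" using iv xs(1) by (simp add: n_def)
      ultimately have "E u (xs ! (n - 2))" using s xu by metis
      hence "xs ! (n - 2) = v" using uv inV[of "n - 2"] xs(1) by (simp add: n_def)
      moreover have "1 \<le> n - 2" "n - 2 < n" using xs(1) by (auto simp: n_def)
      ultimately show False using nv[of "n - 2"] by simp
    qed
  qed
  have inW: "\<forall>k. 1 \<le> k \<and> k \<le> n - 1 \<longrightarrow> xs ! k \<in> V - {u} - {v}"
  proof (intro allI impI)
    fix k assume k: "1 \<le> k \<and> k \<le> n - 1"
    hence "k < n" using xs(1) unfolding n_def by linarith
    thus "xs ! k \<in> V - {u} - {v}" using inV nv nu' k by blast
  qed
  have r: "reach (V - {u} - {v}) E (xs ! 1) (xs ! (n - 1))"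
  proof -
    have "1 \<le> n - 1" "n - 1 < length xs" using xs(1) unfolding n_def by linarith+
    from path_reach[OF xs(5) this inW] show ?thesis .
  qed
  have "Suc 0 < length xs" using xs(1) by linarith
  hence "E (xs ! 0) (xs ! Suc 0)" using xs(5) by blast
  hence e1: "E v (xs ! 1)" using x0 by simp
  have "E (xs ! (n - 1)) v" using xs(6) xs(4) lastn by simp
  hence e2: "E v (xs ! (n - 1))" using s by blast
  have i1: "1 < n" "n - 1 < n" "1 \<noteq> n - 1" using xs(1) unfolding n_def by linarith+
  have d: "xs ! 1 \<noteq> xs ! (n - 1)" using nth_eq_iff_index_eq[OF xs(2), of 1 "n - 1"] i1 by (simp add: n_def)
  have w1: "xs ! 1 \<in> V - {u} - {v}" using inW i1 by simp
  have w2: "xs ! (n - 1) \<in> V - {u} - {v}" using inW i1 by simp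
  have "xs ! 1 \<in> nbr (V - {u}) E v" using e1 w1 by (simp add: nbr_def)
  moreover have "xs ! (n - 1) \<in> nbr (V - {u}) E v" using e2 w2 by (simp add: nbr_def)
  ultimately show ?thesis using r d by blast
qed

theorem theorem4p2:
  fixes V :: "'a set" and E :: "'a \<Rightarrow> 'a \<Rightarrow> bool" and phi :: "'a \<Rightarrow> 'a \<Rightarrow> complex"
    and u v :: 'a
  assumes "simple_graph V E" and "unit_gain E phi"
    and "u \<in> V" and "{w \<in> V. E u w} = {v}"
  shows "(int (mrank V (gain_adj E phi)) = int (mrank V (adj01 E)) + 2 * theta V E \<longrightarrow>
            \<not> on_cycle V E v \<and>
            int (mrank (V - {u, v}) (gain_adj E phi))
              = int (mrank (V - {u, v}) (adj01 E)) + 2 * theta (V - {u, v}) E)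
       \<and> (int (mrank V (gain_adj E phi)) = int (mrank V (adj01 E)) - 2 * theta V E \<longrightarrow>
            \<not> on_cycle V E v \<and>
            int (mrank (V - {u, v}) (gain_adj E phi))
              = int (mrank (V - {u, v}) (adj01 E)) - 2 * theta (V - {u, v}) E)"
proof -
  note sg = assms(1) and ug = assms(2) and u = assms(3) and nu = assms(4)
  have f: "finite V" and s: "symE E" using sg by (auto simp: simple_graph_def symE_def)
  have pP: "pat E (gain_adj E phi)"
    unfolding pat_def gain_adj_def
  proof (intro allI)
    fix i j show "((if E i j then phi i j else 0) \<noteq> 0) = E i j"
    proof (cases "E i j")
      case True
      hence "cmod (phi i j) = 1" using ug by (simp add: unit_gain_def)
      hence "phi i j \<noteq> 0" by auto
      thus ?thesis using True by simp
    qed simp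
  qed
  have pQ: "pat E (adj01 E)" by (simp add: pat_def adj01_def)
  have n: "nbr V E u = {v}" using nu by (simp add: nbr_def)
  have v: "v \<in> V - {u}" using n s by (auto simp: nbr_def symE_def)
  let ?F = "V - {u, v}"
  have FF: "?F = V - {u} - {v}" by auto
  have rP: "mrank V (gain_adj E phi) = mrank ?F (gain_adj E phi) + 2" by (rule rank_pend_pat[OF f u s pP n])
  have rQ: "mrank V (adj01 E) = mrank ?F (adj01 E) + 2" by (rule rank_pend_pat[OF f u s pQ n])
  have t1: "theta (V - {u}) E = theta V E" by (rule theta_pend(1)[OF f u s n])
  define d where "d = card (nbr (V - {u}) E v)"
  define k where "k = card (ccomp (V - {u} - {v}) E ` nbr (V - {u}) E v)"
  have t2: "theta ?F E = theta V E - int d + int k"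
    using theta_del[OF _ v s] f t1 FF by (simp add: d_def k_def)
  have kd: "k \<le> d" unfolding k_def d_def using f by (intro nbr_comp_le) simp
  have cyc: "on_cycle V E v \<Longrightarrow> k + 1 \<le> d"
  proof -
    assume c: "on_cycle V E v"
    obtain a b where ab: "a \<in> nbr (V - {u}) E v" "b \<in> nbr (V - {u}) E v" "a \<noteq> b" "reach (V - {u} - {v}) E a b"
      using cycle_merge[OF sg u nu c] by blast
    show "k + 1 \<le> d" unfolding k_def d_def
      by (rule card_image_merge[OF _ ab(1) ab(2) ab(3) comp_eq[OF s ab(4)]]) (simp add: nbr_def f)
  qed
  have B: "int (mrank ?F (gain_adj E phi)) \<le> int (mrank ?F (adj01 E)) + 2 * theta ?F E \<and>
     int (mrank ?F (adj01 E)) - 2 * theta ?F E \<le> int (mrank ?F (gain_adj E phi))"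
    using bound[OF _ s pP pQ] f by simp
  show ?thesis
  proof (intro conjI impI)
    assume h: "int (mrank V (gain_adj E phi)) = int (mrank V (adj01 E)) + 2 * theta V E"
    hence "k = d" using B rP rQ t2 kd by linarith
    thus "\<not> on_cycle V E v" using cyc by fastforce
    show "int (mrank ?F (gain_adj E phi)) = int (mrank ?F (adj01 E)) + 2 * theta ?F E"
      using h \<open>k = d\<close> rP rQ t2 by linarith
  next
    assume h: "int (mrank V (gain_adj E phi)) = int (mrank V (adj01 E)) - 2 * theta V E"
    hence "k = d" using B rP rQ t2 kd by linarith
    thus "\<not> on_cycle V E v" using cyc by fastforce
    show "int (mrank ?F (gain_adj E phi)) = int (mrank ?F (adj01 E)) - 2 * theta ?F E"
      using h \<open>k = d\<close> rP rQ t2 by linarith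
  qed
qed


end
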